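(* Let $m\ge 1$, let $\lambda_1,\ldots,\lambda_m\in\mathbb R$ be constants, and let $S_1,\ldots,S_m:\mathbb R^m\to\mathbb R$ be smooth functions. Let $Q_{1,0},\ldots,Q_{m,0}:\mathbb R\to\mathbb R$ be smooth initial data and let $Q_\ell:\mathbb R^+_0\times\mathbb R\to\mathbb R$, $\ell=1,\ldots,m$, be the smooth solution of $$(\partial_t+\lambda_\ell\partial_x)Q_\ell=S_\ell(Q_1,\ldots,Q_m),\qquad Q_\ell(0,x)=Q_{\ell,0}(x),\qquad \ell=1,\ldots,m.$$ Fix $\alpha\in(0,1)$. For $t\ge 0$, $x\in\mathbb R$ and $k,\ell=1,\ldots,m$ define $$\xi_{\ell k}:=x-\lambda_\ell t(1-\alpha)-\lambda_k\alpha t,\qquad Q^*_{k\ell}:=Q_{k,0}(\xi_{\ell k})+\alpha t\,S_k\big(Q_{1,0}(\xi_{\ell k}),\ldots,Q_{m,0}(\xi_{\ell k})\big),$$ and $$Q^{(1)}_\ell(t,x):=Q_{\ell,0}(x-\lambda_\ell t)+\Big(1-\frac{1}{2\alpha}\Big)t\,S_\ell\big(Q_{1,0}(x-\lambda_\ell t),\ldots,Q_{m,0}(x-\lambda_\ell t)\big)+\frac{t}{2\alpha}S_\ell\big(Q^*_{1\ell},\ldots,Q^*_{m\ell}\big).$$ Then for every fixed $x$ and every $\ell=1,\ldots,m$, $Q^{(1)}_\ell(t,x)=Q_\ell(t,x)+\mathcal O(t^3)$ as $t\to0$.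
   Context: This is an approximate ("RK2") evolution operator for a linear hyperbolic system written in characteristic variables $Q_\ell$ with constant characteristic speeds $\lambda_\ell$ and a possibly nonlinear source $S$. *)

theory Defs
  imports "HOL-Analysis.Analysis" "HOL-Library.Landau_Symbols"
begin

text \<open>C-infinity smoothness on a set U (derivatives taken within U, so closed
half-planes are allowed): f is (Frechet) differentiable within U at every point
of U, and every first-order partial derivative is again smooth on U.
This coinductive definition yields existence of all iterated partial
derivatives of every order (hence their continuity).\<close>
coinductive smooth_on :: "'a::euclidean_space set \<Rightarrow> ('a \<Rightarrow> real) \<Rightarrow> bool" where
  "(\<forall>x\<in>U. f differentiable (at x within U)) \<Longrightarrow>
   (\<forall>b\<in>Basis. smooth_on U (\<lambda>x. frechet_derivative f (at x within U) b)) \<Longrightarrow>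
   smooth_on U f"

text \<open>The half-plane t \<ge> 0, points written (t, x).\<close>
definition halfplane :: "(real \<times> real) set" where
  "halfplane = {0..} \<times> UNIV"

definition is_smooth_solution ::
  "('m::finite \<Rightarrow> real) \<Rightarrow> ('m \<Rightarrow> real^'m \<Rightarrow> real) \<Rightarrow> ('m \<Rightarrow> real \<Rightarrow> real)
   \<Rightarrow> ('m \<Rightarrow> real \<Rightarrow> real \<Rightarrow> real) \<Rightarrow> bool" where
  "is_smooth_solution lam S Q0 Q \<longleftrightarrow>
     (\<forall>l. smooth_on halfplane (\<lambda>p. Q l (fst p) (snd p))) \<and>
     (\<forall>l x. Q l 0 x = Q0 l x) \<and>
     (\<forall>l t x. t \<ge> 0 \<longrightarrow>
        frechet_derivative (\<lambda>p. Q l (fst p) (snd p)) (at (t, x) within halfplane) (1, 0)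
        + lam l * frechet_derivative (\<lambda>p. Q l (fst p) (snd p)) (at (t, x) within halfplane) (0, 1)
        = S l (\<chi> k. Q k t x))"

definition xi :: "('m::finite \<Rightarrow> real) \<Rightarrow> real \<Rightarrow> 'm \<Rightarrow> 'm \<Rightarrow> real \<Rightarrow> real \<Rightarrow> real" where
  "xi lam \<alpha> l k t x = x - lam l * t * (1 - \<alpha>) - lam k * \<alpha> * t"

definition Qstar ::
  "('m::finite \<Rightarrow> real) \<Rightarrow> ('m \<Rightarrow> real^'m \<Rightarrow> real) \<Rightarrow> ('m \<Rightarrow> real \<Rightarrow> real) \<Rightarrow> real
   \<Rightarrow> 'm \<Rightarrow> 'm \<Rightarrow> real \<Rightarrow> real \<Rightarrow> real" where
  "Qstar lam S Q0 \<alpha> k l t x =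
     (let \<xi> = xi lam \<alpha> l k t x in Q0 k \<xi> + \<alpha> * t * S k (\<chi> j. Q0 j \<xi>))"

definition Q1 ::
  "('m::finite \<Rightarrow> real) \<Rightarrow> ('m \<Rightarrow> real^'m \<Rightarrow> real) \<Rightarrow> ('m \<Rightarrow> real \<Rightarrow> real) \<Rightarrow> real
   \<Rightarrow> 'm \<Rightarrow> real \<Rightarrow> real \<Rightarrow> real" where
  "Q1 lam S Q0 \<alpha> l t x =
     Q0 l (x - lam l * t)
     + (1 - 1 / (2 * \<alpha>)) * t * S l (\<chi> j. Q0 j (x - lam l * t))
     + t / (2 * \<alpha>) * S l (\<chi> k. Qstar lam S Q0 \<alpha> k l t x)"

end

theory Submission
  imports Defs
begin

lemma bound_deriv:
  fixes f f' :: "real \<Rightarrow> real"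
  assumes u: "0 \<le> u"
    and d: "\<And>s. s \<in> {0..u} \<Longrightarrow> (f has_real_derivative f' s) (at s within {0..u})"
    and b: "\<And>s. s \<in> {0..u} \<Longrightarrow> \<bar>f' s\<bar> \<le> B"
  shows "\<bar>f u - f 0\<bar> \<le> B * u"
proof -
  have "norm (f u - f 0) \<le> B * norm (u - 0)"
  proof (rule differentiable_bound[where f'="\<lambda>s h. h *\<^sub>R f' s"])
    show "convex {0..u}" by simp
    show "(f has_derivative (\<lambda>h. h *\<^sub>R f' s)) (at s within {0..u})" if "s \<in> {0..u}" for s
    proof -
      have "(\<lambda>h. h *\<^sub>R f' s) = (*) (f' s)" by (auto simp: fun_eq_iff)
      then show ?thesis using d[OF that] by (simp add: has_field_derivative_def)
    qed
    show "onorm (\<lambda>h. h *\<^sub>R f' s) \<le> B" if "s \<in> {0..u}" for s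
    proof -
      have "onorm (\<lambda>h::real. h *\<^sub>R f' s) = onorm (\<lambda>h::real. h) * norm (f' s)"
        by (rule onorm_scaleR_left[OF bounded_linear_ident])
      then have "onorm (\<lambda>h::real. h *\<^sub>R f' s) = \<bar>f' s\<bar>" by (simp add: onorm_id)
      then show ?thesis using b[OF that] by simp
    qed
  qed (use u in auto)
  then show ?thesis using u by simp
qed

lemma taylor2_bound:
  fixes g gA gB :: "real \<Rightarrow> real"
  assumes d0: "\<And>s. s \<in> {0..1} \<Longrightarrow> (g has_real_derivative gA s) (at s within {0..1})"
    and d1: "\<And>s. s \<in> {0..1} \<Longrightarrow> (gA has_real_derivative gB s) (at s within {0..1})"
    and b: "\<And>s. s \<in> {0..1} \<Longrightarrow> \<bar>gB s\<bar> \<le> M"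
    and t: "0 \<le> t" "t \<le> 1"
  shows "\<bar>g t - g 0 - t * gA 0\<bar> \<le> M * t^2"
proof -
  have r1: "\<bar>gA u - gA 0\<bar> \<le> M * t" if "0 \<le> u" "u \<le> t" for u
  proof -
    have "\<bar>gA u - gA 0\<bar> \<le> M * u"
      using that t by (intro bound_deriv[where f'=gB]) (auto intro: DERIV_subset[OF d1] b)
    moreover have "M \<ge> 0" using b[of 0] by auto
    ultimately show ?thesis using that mult_left_mono[of u t M] by linarith
  qed
  have "\<bar>(g t - t * gA 0) - (g 0 - 0 * gA 0)\<bar> \<le> (M * t) * t"
    using t
    by (intro bound_deriv[where f'="\<lambda>s. gA s - gA 0"])
       (auto intro!: derivative_eq_intros DERIV_subset[OF d0] r1)
  then show ?thesis by (simp add: power2_eq_square mult.assoc)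
qed

lemma taylor3_bound:
  fixes g gA gB gC :: "real \<Rightarrow> real"
  assumes d0: "\<And>s. s \<in> {0..1} \<Longrightarrow> (g has_real_derivative gA s) (at s within {0..1})"
    and d1: "\<And>s. s \<in> {0..1} \<Longrightarrow> (gA has_real_derivative gB s) (at s within {0..1})"
    and d2: "\<And>s. s \<in> {0..1} \<Longrightarrow> (gB has_real_derivative gC s) (at s within {0..1})"
    and b: "\<And>s. s \<in> {0..1} \<Longrightarrow> \<bar>gC s\<bar> \<le> M"
    and t: "0 \<le> t" "t \<le> 1"
  shows "\<bar>g t - g 0 - t * gA 0 - t^2 / 2 * gB 0\<bar> \<le> M * t^3"
proof -
  have M0: "M \<ge> 0" using b[of 0] by auto
  have r2: "\<bar>gB u - gB 0\<bar> \<le> M * t" if "0 \<le> u" "u \<le> t" for u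
  proof -
    have "\<bar>gB u - gB 0\<bar> \<le> M * u"
      using that t by (intro bound_deriv[where f'=gC]) (auto intro: DERIV_subset[OF d2] b)
    then show ?thesis using that M0 mult_left_mono[of u t M] by linarith
  qed
  have r1: "\<bar>gA u - u * gB 0 - gA 0\<bar> \<le> M * t^2" if "0 \<le> u" "u \<le> t" for u
  proof -
    have "\<bar>(gA u - u * gB 0) - (gA 0 - 0 * gB 0)\<bar> \<le> (M * t) * u"
      using that t
      by (intro bound_deriv[where f'="\<lambda>s. gB s - gB 0"])
         (auto intro!: derivative_eq_intros DERIV_subset[OF d1] r2)
    moreover have "(M * t) * u \<le> (M * t) * t" using that M0 t by (intro mult_left_mono) auto
    ultimately show ?thesis by (simp add: power2_eq_square mult.assoc)
  qed
  have r1': "\<bar>gA u - (gA 0 + u * gB 0)\<bar> \<le> M * t^2" if "0 \<le> u" "u \<le> t" for u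
    using r1[OF that] by (simp add: algebra_simps)
  have "\<bar>(g t - t * gA 0 - t^2/2 * gB 0) - (g 0 - 0 * gA 0 - 0^2/2 * gB 0)\<bar> \<le> (M * t^2) * t"
    using t
    by (intro bound_deriv[where f'="\<lambda>s. gA s - gA 0 - s * gB 0"])
       (auto intro!: derivative_eq_intros DERIV_subset[OF d0] r1' simp: algebra_simps)
  then show ?thesis by (simp add: power3_eq_cube power2_eq_square mult.assoc algebra_simps)
qed



definition Dd :: "(real \<times> real \<Rightarrow> real) \<Rightarrow> real \<times> real \<Rightarrow> real \<times> real \<Rightarrow> real" where
  "Dd F v p = frechet_derivative F (at p within halfplane) v"

definition d1 :: "(real \<Rightarrow> real) \<Rightarrow> real \<Rightarrow> real" where
  "d1 h z = frechet_derivative h (at z) 1"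

definition dm :: "(real^'m \<Rightarrow> real) \<Rightarrow> 'm::finite \<Rightarrow> real^'m \<Rightarrow> real" where
  "dm H k z = frechet_derivative H (at z) (axis k 1)"

lemma mem_HP: "p \<in> halfplane \<longleftrightarrow> fst p \<ge> 0"
  by (cases p) (auto simp: halfplane_def)

lemma smooth_onD:
  assumes "smooth_on U f"
  shows "\<forall>x\<in>U. f differentiable (at x within U)"
    "\<forall>b\<in>Basis. smooth_on U (\<lambda>x. frechet_derivative f (at x within U) b)"
  using assms by (auto elim: smooth_on.cases)

lemma HP_unique:
  assumes "p \<in> halfplane" "(F has_derivative F') (at p within halfplane)"
  shows "frechet_derivative F (at p within halfplane) = F'"
proof -
  have "F differentiable (at p within halfplane)" using assms(2) by (auto simp: differentiable_def)
  then have fd: "(F has_derivative frechet_derivative F (at p within halfplane)) (at p within halfplane)"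
    by (simp add: frechet_derivative_works)
  show ?thesis
  proof (rule frechet_derivative_unique_within[OF fd assms(2)])
    fix i :: "real\<times>real" and e :: real assume i: "i \<in> Basis" and e: "e > 0"
    have "fst i \<ge> 0" using i by (auto simp: Basis_prod_def)
    then show "\<exists>d. 0 < \<bar>d\<bar> \<and> \<bar>d\<bar> < e \<and> p + d *\<^sub>R i \<in> halfplane"
      using e assms(1) by (intro exI[of _ "e/2"]) (auto simp: mem_HP)
  qed
qed

lemma Dd_eq:
  assumes "p \<in> halfplane" "(F has_derivative F') (at p within halfplane)"
  shows "Dd F v p = F' v"
  using HP_unique[OF assms] by (simp add: Dd_def)

lemma Dd_has:
  assumes "F differentiable (at p within halfplane)"
  shows "(F has_derivative (\<lambda>v. Dd F v p)) (at p within halfplane)"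
  using assms frechet_derivative_works unfolding Dd_def by (metis eta_contract_eq)

lemma Dd_linear:
  assumes "F differentiable (at p within halfplane)"
  shows "Dd F v p = fst v * Dd F (1,0) p + snd v * Dd F (0,1) p"
proof -
  have bl: "bounded_linear (\<lambda>v. Dd F v p)"
    using Dd_has[OF assms] has_derivative_bounded_linear by blast
  then have lin: "linear (\<lambda>v. Dd F v p)" by (rule bounded_linear.linear)
  have "v = fst v *\<^sub>R (1,0) + snd v *\<^sub>R (0::real,1::real)" by (cases v) simp
  then have "Dd F v p = Dd F (fst v *\<^sub>R (1,0) + snd v *\<^sub>R (0,1)) p" by simp
  also have "\<dots> = fst v * Dd F (1,0) p + snd v * Dd F (0,1) p"
    by (simp only: linear_add[OF lin] linear_scale[OF lin] real_scaleR_def)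
  finally show ?thesis .
qed

lemma d1_linear:
  assumes "h differentiable (at z)"
  shows "frechet_derivative h (at z) w = w * d1 h z"
proof -
  have "bounded_linear (frechet_derivative h (at z))"
    using assms frechet_derivative_works has_derivative_bounded_linear by blast
  then interpret bounded_linear "frechet_derivative h (at z)" .
  have "frechet_derivative h (at z) (w *\<^sub>R 1) = w *\<^sub>R frechet_derivative h (at z) 1" by (rule scale)
  then show ?thesis by (simp add: d1_def)
qed

lemma dm_linear:
  fixes H :: "real^'m::finite \<Rightarrow> real"
  assumes "H differentiable (at z)"
  shows "frechet_derivative H (at z) w = (\<Sum>k\<in>UNIV. w $ k * dm H k z)"
proof -
  have "bounded_linear (frechet_derivative H (at z))"
    using assms frechet_derivative_works has_derivative_bounded_linear by blast
  then interpret bounded_linear "frechet_derivative H (at z)" .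
  have "frechet_derivative H (at z) w = frechet_derivative H (at z) (\<Sum>k\<in>UNIV. w $ k *\<^sub>R axis k 1)"
    using basis_expansion[of w] by (simp add: scalar_mult_eq_scaleR)
  also have "\<dots> = (\<Sum>k\<in>UNIV. w $ k * dm H k z)"
    by (simp add: sum scale dm_def)
  finally show ?thesis .
qed

lemma has_derivative_vec:
  fixes G :: "'m::finite \<Rightarrow> 'a::real_normed_vector \<Rightarrow> real"
  assumes "\<And>k. (G k has_derivative G' k) F"
  shows "((\<lambda>p. \<chi> k. G k p) has_derivative (\<lambda>v. \<chi> k. G' k v)) F"
proof -
  have e1: "(\<lambda>p. \<chi> k. G k p) = (\<lambda>p. \<Sum>k\<in>UNIV. G k p *\<^sub>R (axis k 1 :: real^'m))"
    by (auto simp: fun_eq_iff vec_eq_iff sum_component axis_def if_distrib sum.If_cases cong del: if_weak_cong)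
  have e2: "(\<lambda>v. \<chi> k. G' k v) = (\<lambda>v. \<Sum>k\<in>UNIV. G' k v *\<^sub>R (axis k 1 :: real^'m))"
    by (auto simp: fun_eq_iff vec_eq_iff sum_component axis_def if_distrib sum.If_cases cong del: if_weak_cong)
  show ?thesis unfolding e1 e2
    by (intro has_derivative_sum has_derivative_scaleR_left assms)
qed



lemma dlin: "((\<lambda>p::real\<times>real. a * fst p + b * snd p + d) has_derivative (\<lambda>v. a * fst v + b * snd v)) (at p within halfplane)"
  by (auto intro!: derivative_eq_intros)

lemma dadd:
  assumes "F differentiable (at p within halfplane)" "G differentiable (at p within halfplane)"
  shows "((\<lambda>p. F p + G p) has_derivative (\<lambda>v. Dd F v p + Dd G v p)) (at p within halfplane)"
  by (intro has_derivative_add Dd_has assms)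

lemma dmul:
  assumes "F differentiable (at p within halfplane)" "G differentiable (at p within halfplane)"
  shows "((\<lambda>p. F p * G p) has_derivative (\<lambda>v. F p * Dd G v p + Dd F v p * G p)) (at p within halfplane)"
  by (intro has_derivative_mult Dd_has assms)

lemma dcomp1:
  assumes "smooth_on UNIV h" "F differentiable (at p within halfplane)"
  shows "((\<lambda>p. h (F p)) has_derivative (\<lambda>v. Dd F v p * d1 h (F p))) (at p within halfplane)"
proof -
  have hd: "h differentiable (at (F p))" using smooth_onD(1)[OF assms(1)] by auto
  have "((\<lambda>p. h (F p)) has_derivative (\<lambda>v. frechet_derivative h (at (F p)) (Dd F v p))) (at p within halfplane)"
    using has_derivative_compose[OF Dd_has[OF assms(2)] hd[unfolded frechet_derivative_works]] .
  then show ?thesis by (simp add: d1_linear[OF hd])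
qed

lemma dcompm:
  fixes H :: "real^'m::finite \<Rightarrow> real"
  assumes "smooth_on UNIV H" "\<And>k. G k differentiable (at p within halfplane)"
  shows "((\<lambda>p. H (\<chi> k. G k p)) has_derivative
     (\<lambda>v. \<Sum>k\<in>UNIV. Dd (G k) v p * dm H k (\<chi> j. G j p))) (at p within halfplane)"
proof -
  have hd: "H differentiable (at (\<chi> j. G j p))" using smooth_onD(1)[OF assms(1)] by auto
  have gv: "((\<lambda>p. \<chi> k. G k p) has_derivative (\<lambda>v. \<chi> k. Dd (G k) v p)) (at p within halfplane)"
    by (intro has_derivative_vec Dd_has assms(2))
  have "((\<lambda>p. H (\<chi> k. G k p)) has_derivative (\<lambda>v. frechet_derivative H (at (\<chi> j. G j p)) (\<chi> k. Dd (G k) v p))) (at p within halfplane)"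
    using has_derivative_compose[OF gv hd[unfolded frechet_derivative_works]] .
  then show ?thesis by (simp add: dm_linear[OF hd])
qed

lemma d1_smooth: "smooth_on UNIV h \<Longrightarrow> smooth_on UNIV (d1 h)"
  using smooth_onD(2)[of UNIV h] by (auto simp: d1_def[abs_def])

lemma dm_smooth: "smooth_on UNIV (H :: real^'m::finite \<Rightarrow> real) \<Longrightarrow> smooth_on UNIV (dm H k)"
  using smooth_onD(2)[of UNIV H] by (auto simp: dm_def[abs_def])

inductive alg :: "'m::finite itself \<Rightarrow> (real \<times> real \<Rightarrow> real) \<Rightarrow> bool" for T where
  base: "smooth_on halfplane F \<Longrightarrow> alg T F"
| lin: "alg T (\<lambda>p. a * fst p + b * snd p + d)"
| add: "alg T F \<Longrightarrow> alg T G \<Longrightarrow> alg T (\<lambda>p. F p + G p)"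
| mul: "alg T F \<Longrightarrow> alg T G \<Longrightarrow> alg T (\<lambda>p. F p * G p)"
| comp1: "smooth_on UNIV h \<Longrightarrow> alg T F \<Longrightarrow> alg T (\<lambda>p. h (F p))"
| compm: "smooth_on UNIV (H :: real^'m \<Rightarrow> real) \<Longrightarrow> (\<forall>k. alg T (G k)) \<Longrightarrow> alg T (\<lambda>p. H (\<chi> k. G k p))"
| ext: "alg T F \<Longrightarrow> (\<forall>p\<in>halfplane. F p = G p) \<Longrightarrow> alg T G"

lemma alg_const: "alg T (\<lambda>p. c)"
  by (rule alg.ext[OF alg.lin[of T 0 0 c]]) simp

lemma alg_sum: "finite A \<Longrightarrow> (\<forall>k\<in>A. alg T (f k)) \<Longrightarrow> alg T (\<lambda>p. \<Sum>k\<in>A. f k p)"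
  by (induction A rule: finite_induct) (auto intro: alg_const alg.add)

lemma alg_props:
  assumes "alg T F"
  shows "(\<forall>p\<in>halfplane. F differentiable (at p within halfplane)) \<and> (\<forall>v. alg T (\<lambda>p. Dd F v p))"
  using assms
proof (induction rule: alg.induct)
  case (base F)
  have dF: "\<forall>p\<in>halfplane. F differentiable (at p within halfplane)" using smooth_onD(1)[OF base] .
  have s1: "alg T (\<lambda>p. Dd F (1,0) p)" "alg T (\<lambda>p. Dd F (0,1) p)"
    using smooth_onD(2)[OF base] by (auto intro!: alg.base simp: Dd_def[abs_def] Basis_prod_def)
  have "alg T (\<lambda>p. Dd F v p)" for v
  proof (rule alg.ext[OF alg.add[OF alg.mul[OF alg_const s1(1)] alg.mul[OF alg_const s1(2)]]])
    show "\<forall>p\<in>halfplane. fst v * Dd F (1, 0) p + snd v * Dd F (0, 1) p = Dd F v p"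
    proof
      fix p :: "real \<times> real" assume "p \<in> halfplane"
      then show "fst v * Dd F (1, 0) p + snd v * Dd F (0, 1) p = Dd F v p"
        using Dd_linear[of F p v] dF by simp
    qed
  qed
  with dF show ?case by blast
next
  case (lin a b d)
  show ?case
  proof (intro conjI ballI allI)
    show "(\<lambda>p. a * fst p + b * snd p + d) differentiable (at p within halfplane)" for p
      using dlin[of a b d p] by (auto simp: differentiable_def)
    show "alg T (\<lambda>p. Dd (\<lambda>p. a * fst p + b * snd p + d) v p)" for v
    proof (rule alg.ext[OF alg_const[of T "a * fst v + b * snd v"]], intro ballI)
      fix p :: "real \<times> real" assume "p \<in> halfplane"
      from Dd_eq[OF this dlin] show "a * fst v + b * snd v = Dd (\<lambda>p. a * fst p + b * snd p + d) v p" by simp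
    qed
  qed
next
  case (add F G)
  show ?case
  proof (intro conjI ballI allI)
    show "(\<lambda>p. F p + G p) differentiable (at p within halfplane)" if "p \<in> halfplane" for p
      using add that by (intro differentiableI[OF dadd]) auto
    show "alg T (\<lambda>p. Dd (\<lambda>p. F p + G p) v p)" for v
    proof (rule alg.ext[of T "\<lambda>p. Dd F v p + Dd G v p"])
      show "alg T (\<lambda>p. Dd F v p + Dd G v p)" using add by (intro alg.add) blast+
      show "\<forall>p\<in>halfplane. Dd F v p + Dd G v p = Dd (\<lambda>p. F p + G p) v p"
      proof
      fix p :: "real \<times> real" assume p: "p \<in> halfplane"
      from Dd_eq[OF p dadd] add p show "Dd F v p + Dd G v p = Dd (\<lambda>p. F p + G p) v p" by simp
    qed
    qed
  qed
next
  case (mul F G)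
  show ?case
  proof (intro conjI ballI allI)
    show "(\<lambda>p. F p * G p) differentiable (at p within halfplane)" if "p \<in> halfplane" for p
      using mul that by (intro differentiableI[OF dmul]) auto
    show "alg T (\<lambda>p. Dd (\<lambda>p. F p * G p) v p)" for v
    proof (rule alg.ext[of T "\<lambda>p. F p * Dd G v p + Dd F v p * G p"])
      show "alg T (\<lambda>p. F p * Dd G v p + Dd F v p * G p)" using mul by (intro alg.add alg.mul) blast+
      show "\<forall>p\<in>halfplane. F p * Dd G v p + Dd F v p * G p = Dd (\<lambda>p. F p * G p) v p"
      proof
      fix p :: "real \<times> real" assume p: "p \<in> halfplane"
      from Dd_eq[OF p dmul] mul p show "F p * Dd G v p + Dd F v p * G p = Dd (\<lambda>p. F p * G p) v p" by simp
    qed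
    qed
  qed
next
  case (comp1 h F)
  show ?case
  proof (intro conjI ballI allI)
    show "(\<lambda>p. h (F p)) differentiable (at p within halfplane)" if "p \<in> halfplane" for p
    proof -
      have "F differentiable (at p within halfplane)" using comp1(3) that by blast
      from differentiableI[OF dcomp1[OF comp1(1) this]] show ?thesis .
    qed
    show "alg T (\<lambda>p. Dd (\<lambda>p. h (F p)) v p)" for v
    proof (rule alg.ext[of T "\<lambda>p. Dd F v p * d1 h (F p)"])
      have a1: "alg T (\<lambda>p. Dd F v p)" using comp1 by blast
      have a2: "alg T (\<lambda>p. d1 h (F p))" by (rule alg.comp1[OF d1_smooth[OF comp1(1)] comp1(2)])
      show "alg T (\<lambda>p. Dd F v p * d1 h (F p))" by (rule alg.mul[OF a1 a2])
      show "\<forall>p\<in>halfplane. Dd F v p * d1 h (F p) = Dd (\<lambda>p. h (F p)) v p"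
      proof
      fix p :: "real \<times> real" assume p: "p \<in> halfplane"
      have "F differentiable (at p within halfplane)" using comp1(3) p by blast
      from Dd_eq[OF p dcomp1[OF comp1(1) this]] show "Dd F v p * d1 h (F p) = Dd (\<lambda>p. h (F p)) v p" by simp
    qed
    qed
  qed
next
  case (compm H G)
  show ?case
  proof (intro conjI ballI allI)
    show "(\<lambda>p. H (\<chi> k. G k p)) differentiable (at p within halfplane)" if "p \<in> halfplane" for p
      using compm(2) that by (intro differentiableI[OF dcompm[OF compm(1)]]) auto
    show "alg T (\<lambda>p. Dd (\<lambda>p. H (\<chi> k. G k p)) v p)" for v
    proof (rule alg.ext[of T "\<lambda>p. \<Sum>k\<in>UNIV. Dd (G k) v p * dm H k (\<chi> j. G j p)"])
      show "alg T (\<lambda>p. \<Sum>k\<in>UNIV. Dd (G k) v p * dm H k (\<chi> j. G j p))"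
      proof (rule alg_sum, simp, intro ballI)
        fix k
        have a1: "alg T (\<lambda>p. Dd (G k) v p)" using compm(2) by blast
        have a2: "alg T (\<lambda>p. dm H k (\<chi> j. G j p))"
          by (rule alg.compm[OF dm_smooth[OF compm(1)]]) (use compm(2) in blast)
        show "alg T (\<lambda>p. Dd (G k) v p * dm H k (\<chi> j. G j p))" by (rule alg.mul[OF a1 a2])
      qed
      show "\<forall>p\<in>halfplane. (\<Sum>k\<in>UNIV. Dd (G k) v p * dm H k (\<chi> j. G j p)) = Dd (\<lambda>p. H (\<chi> k. G k p)) v p"
      proof
      fix p :: "real \<times> real" assume p: "p \<in> halfplane"
      have "\<And>k. G k differentiable (at p within halfplane)" using compm(2) p by auto
      from Dd_eq[OF p dcompm[OF compm(1) this]]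
      show "(\<Sum>k\<in>UNIV. Dd (G k) v p * dm H k (\<chi> j. G j p)) = Dd (\<lambda>p. H (\<chi> k. G k p)) v p" by simp
    qed
    qed
  qed
next
  case (ext F G)
  have eqd: "(G has_derivative (\<lambda>v. Dd F v p)) (at p within halfplane)" if "p \<in> halfplane" for p
    using ext that by (intro has_derivative_transform_within[OF Dd_has _ that, of _ 1]) auto
  show ?case
  proof (intro conjI ballI allI)
    show "G differentiable (at p within halfplane)" if "p \<in> halfplane" for p
      using eqd[OF that] by (auto simp: differentiable_def)
    show "alg T (\<lambda>p. Dd G v p)" for v
    proof (rule alg.ext[of T "\<lambda>p. Dd F v p"])
      show "alg T (\<lambda>p. Dd F v p)" using ext by blast
      show "\<forall>p\<in>halfplane. Dd F v p = Dd G v p"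
      proof
      fix p :: "real \<times> real" assume p: "p \<in> halfplane"
      from Dd_eq[OF p eqd[OF p]] show "Dd F v p = Dd G v p" by simp
    qed
    qed
  qed
qed

lemma alg_smooth:
  assumes "alg T F" shows "smooth_on halfplane F"
  using assms
proof (coinduction arbitrary: F rule: smooth_on.coinduct)
  case (smooth_on F)
  from alg_props[OF smooth_on] show ?case
    by (auto simp: Dd_def[abs_def])
qed



lemma alg_diff: "alg T F \<Longrightarrow> p \<in> halfplane \<Longrightarrow> F differentiable (at p within halfplane)"
  using alg_props by blast

lemma alg_D: "alg T F \<Longrightarrow> alg T (\<lambda>p. Dd F v p)"
  using alg_props by blast

lemma smooth_cont: "smooth_on U f \<Longrightarrow> continuous_on U f"
proof -
  assume "smooth_on U f"
  then have "\<forall>x\<in>U. continuous (at x within U) f"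
    using smooth_onD(1) differentiable_imp_continuous_within by blast
  then show ?thesis by (simp add: continuous_on_eq_continuous_within)
qed

lemma line_deriv:
  assumes "alg T F" "s \<ge> 0"
  shows "((\<lambda>s. F (s, y + c * s)) has_real_derivative Dd F (1,c) (s, y + c * s)) (at s within {0..})"
proof -
  have phi: "((\<lambda>s. (s, y + c * s)) has_derivative (\<lambda>h. (h, c * h))) (at s within {0..})"
    by (auto intro!: derivative_eq_intros)
  have "((\<lambda>s. F (s, y + c * s)) has_derivative (\<lambda>h. Dd F (h, c * h) (s, y + c * s))) (at s within {0..})"
    by (rule has_derivative_in_compose2[of halfplane F "\<lambda>p v. Dd F v p", OF _ _ _ phi])
       (use assms in \<open>auto intro!: Dd_has alg_diff[OF assms(1)] simp: mem_HP\<close>)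
  moreover have "(\<lambda>h. Dd F (h, c * h) (s, y + c * s)) = (*) (Dd F (1,c) (s, y + c * s))"
  proof
    fix h
    have d: "F differentiable (at (s, y + c * s) within halfplane)" using assms by (intro alg_diff) (auto simp: mem_HP)
    show "Dd F (h, c * h) (s, y + c * s) = Dd F (1,c) (s, y + c * s) * h"
      using Dd_linear[OF d, of "(h, c * h)"] Dd_linear[OF d, of "(1, c)"] by (simp add: algebra_simps)
  qed
  ultimately show ?thesis by (simp add: has_field_derivative_def)
qed

lemma line_bound:
  fixes G :: "real \<times> real \<Rightarrow> real"
  assumes "continuous_on halfplane G"
  shows "\<exists>M. \<forall>y\<in>{a..b}. \<forall>s\<in>{0..1}. \<bar>G (s, y + c * s)\<bar> \<le> M"
proof -
  let ?K = "{0..1::real} \<times> {a..b::real}"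
  have "continuous_on ?K (\<lambda>q. G (fst q, snd q + c * fst q))"
    by (rule continuous_on_compose2[OF assms]) (auto intro!: continuous_intros simp: mem_HP)
  then have "compact ((\<lambda>q. G (fst q, snd q + c * fst q)) ` ?K)"
    by (intro compact_continuous_image compact_Times) auto
  then obtain M where "\<forall>z\<in>(\<lambda>q. G (fst q, snd q + c * fst q)) ` ?K. norm z \<le> M"
    using compact_imp_bounded bounded_iff by metis
  then show ?thesis by force
qed

lemma K3:
  assumes "alg T F"
  shows "\<exists>M. \<forall>y\<in>{a..b}. \<forall>s\<in>{0..1}.
    \<bar>F (s, y + c * s) - F (0, y) - s * Dd F (1,c) (0,y) - s^2/2 * Dd (\<lambda>p. Dd F (1,c) p) (1,c) (0,y)\<bar> \<le> M * s^3"
proof -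
  define F1 where "F1 = (\<lambda>p. Dd F (1,c) p)"
  define F2 where "F2 = (\<lambda>p. Dd F1 (1,c) p)"
  define F3 where "F3 = (\<lambda>p. Dd F2 (1,c) p)"
  have a1: "alg T F1" and a2: "alg T F2" and a3: "alg T F3"
    unfolding F1_def F2_def F3_def by (intro alg_D assms)+
  obtain M where M: "\<forall>y\<in>{a..b}. \<forall>s\<in>{0..1}. \<bar>F3 (s, y + c * s)\<bar> \<le> M"
    using line_bound[OF smooth_cont[OF alg_smooth[OF a3]]] by blast
  show ?thesis
  proof (intro exI ballI)
    fix y s assume y: "y \<in> {a..b}" and s: "s \<in> {0..(1::real)}"
    have "\<bar>F (s, y + c * s) - F (0, y + c * 0) - s * F1 (0, y + c * 0) - s^2/2 * F2 (0, y + c * 0)\<bar> \<le> M * s^3"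
    proof (rule taylor3_bound[where g="\<lambda>s. F (s, y + c * s)" and gA="\<lambda>s. F1 (s, y + c * s)"
          and gB="\<lambda>s. F2 (s, y + c * s)" and gC="\<lambda>s. F3 (s, y + c * s)"])
      fix u :: real assume u: "u \<in> {0..1}"
      have sub: "{0..1} \<subseteq> {0::real..}" by auto
      show "((\<lambda>s. F (s, y + c * s)) has_real_derivative F1 (u, y + c * u)) (at u within {0..1})"
        using DERIV_subset[OF line_deriv[OF assms, of u y c] sub] u by (simp add: F1_def)
      show "((\<lambda>s. F1 (s, y + c * s)) has_real_derivative F2 (u, y + c * u)) (at u within {0..1})"
        using DERIV_subset[OF line_deriv[OF a1, of u y c] sub] u by (simp add: F2_def)
      show "((\<lambda>s. F2 (s, y + c * s)) has_real_derivative F3 (u, y + c * u)) (at u within {0..1})"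
        using DERIV_subset[OF line_deriv[OF a2, of u y c] sub] u by (simp add: F3_def)
      show "\<bar>F3 (u, y + c * u)\<bar> \<le> M" using M y u by blast
    qed (use s in auto)
    then show "\<bar>F (s, y + c * s) - F (0, y) - s * Dd F (1,c) (0,y) - s^2/2 * Dd (\<lambda>p. Dd F (1,c) p) (1,c) (0,y)\<bar> \<le> M * s^3"
      by (simp add: F1_def F2_def)
  qed
qed

lemma K2:
  assumes "alg T F"
  shows "\<exists>M. \<forall>y\<in>{a..b}. \<forall>s\<in>{0..1}.
    \<bar>F (s, y + c * s) - F (0, y) - s * Dd F (1,c) (0,y)\<bar> \<le> M * s^2"
proof -
  define F1 where "F1 = (\<lambda>p. Dd F (1,c) p)"
  define F2 where "F2 = (\<lambda>p. Dd F1 (1,c) p)"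
  have a1: "alg T F1" and a2: "alg T F2"
    unfolding F1_def F2_def by (intro alg_D assms)+
  obtain M where M: "\<forall>y\<in>{a..b}. \<forall>s\<in>{0..1}. \<bar>F2 (s, y + c * s)\<bar> \<le> M"
    using line_bound[OF smooth_cont[OF alg_smooth[OF a2]]] by blast
  show ?thesis
  proof (intro exI ballI)
    fix y s assume y: "y \<in> {a..b}" and s: "s \<in> {0..(1::real)}"
    have "\<bar>F (s, y + c * s) - F (0, y + c * 0) - s * F1 (0, y + c * 0)\<bar> \<le> M * s^2"
    proof (rule taylor2_bound[where g="\<lambda>s. F (s, y + c * s)" and gA="\<lambda>s. F1 (s, y + c * s)"
          and gB="\<lambda>s. F2 (s, y + c * s)"])
      fix u :: real assume u: "u \<in> {0..1}"
      have sub: "{0..1} \<subseteq> {0::real..}" by auto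
      show "((\<lambda>s. F (s, y + c * s)) has_real_derivative F1 (u, y + c * u)) (at u within {0..1})"
        using DERIV_subset[OF line_deriv[OF assms, of u y c] sub] u by (simp add: F1_def)
      show "((\<lambda>s. F1 (s, y + c * s)) has_real_derivative F2 (u, y + c * u)) (at u within {0..1})"
        using DERIV_subset[OF line_deriv[OF a1, of u y c] sub] u by (simp add: F2_def)
      show "\<bar>F2 (u, y + c * u)\<bar> \<le> M" using M y u by blast
    qed (use s in auto)
    then show "\<bar>F (s, y + c * s) - F (0, y) - s * Dd F (1,c) (0,y)\<bar> \<le> M * s^2"
      by (simp add: F1_def)
  qed
qed



lemma Dd_add: "alg T A \<Longrightarrow> alg T B \<Longrightarrow> p \<in> halfplane \<Longrightarrow>
  Dd (\<lambda>p. A p + B p) v p = Dd A v p + Dd B v p"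
  by (rule Dd_eq[OF _ dadd]) (auto intro: alg_diff)

lemma Dd_mul: "alg T A \<Longrightarrow> alg T B \<Longrightarrow> p \<in> halfplane \<Longrightarrow>
  Dd (\<lambda>p. A p * B p) v p = A p * Dd B v p + Dd A v p * B p"
  by (rule Dd_eq[OF _ dmul]) (auto intro: alg_diff)

lemma Dd_comp1: "smooth_on UNIV h \<Longrightarrow> alg T A \<Longrightarrow> p \<in> halfplane \<Longrightarrow>
  Dd (\<lambda>p. h (A p)) v p = Dd A v p * d1 h (A p)"
  by (rule Dd_eq[OF _ dcomp1]) (auto intro: alg_diff)

lemma Dd_compm:
  fixes H :: "real^'m::finite \<Rightarrow> real"
  shows "smooth_on UNIV H \<Longrightarrow> (\<And>k. alg T (G k)) \<Longrightarrow> p \<in> halfplane \<Longrightarrow>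
  Dd (\<lambda>p. H (\<chi> k. G k p)) v p = (\<Sum>k\<in>UNIV. Dd (G k) v p * dm H k (\<chi> j. G j p))"
  by (rule Dd_eq[OF _ dcompm]) (auto intro: alg_diff)

lemma Dd_lin: "p \<in> halfplane \<Longrightarrow> Dd (\<lambda>p. a * fst p + b * snd p + d) v p = a * fst v + b * snd v"
  by (rule Dd_eq[OF _ dlin])

lemma Dd_cong:
  assumes "alg T A" "\<forall>p\<in>halfplane. A p = B p" "p \<in> halfplane"
  shows "Dd B v p = Dd A v p"
proof -
  have "(B has_derivative (\<lambda>v. Dd A v p)) (at p within halfplane)"
    using assms by (intro has_derivative_transform_within[OF Dd_has[OF alg_diff] _ assms(3), of _ _ 1]) auto
  from Dd_eq[OF assms(3) this] show ?thesis .
qed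



definition Lf :: "('m::finite \<Rightarrow> real) \<Rightarrow> 'm \<Rightarrow> 'm \<Rightarrow> real \<times> real \<Rightarrow> real" where
  "Lf lam l k = (\<lambda>p. (lam l - lam k) * fst p + 1 * snd p + 0)"

definition Uf :: "('m::finite \<Rightarrow> real) \<Rightarrow> ('m \<Rightarrow> real^'m \<Rightarrow> real) \<Rightarrow> ('m \<Rightarrow> real \<Rightarrow> real) \<Rightarrow> 'm \<Rightarrow> 'm \<Rightarrow> real \<times> real \<Rightarrow> real" where
  "Uf lam S Q0 l k = (\<lambda>p. Q0 k (Lf lam l k p) + (1 * fst p + 0 * snd p + 0) * S k (\<chi> j. Q0 j (Lf lam l k p)))"

definition Wf :: "('m::finite \<Rightarrow> real) \<Rightarrow> ('m \<Rightarrow> real^'m \<Rightarrow> real) \<Rightarrow> ('m \<Rightarrow> real \<Rightarrow> real) \<Rightarrow> 'm \<Rightarrow> real \<times> real \<Rightarrow> real" where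
  "Wf lam S Q0 l = (\<lambda>p. S l (\<chi> k. Uf lam S Q0 l k p))"

context
  fixes lam :: "'m::finite \<Rightarrow> real" and S :: "'m \<Rightarrow> real^'m \<Rightarrow> real"
    and Q0 :: "'m \<Rightarrow> real \<Rightarrow> real" and Q :: "'m \<Rightarrow> real \<Rightarrow> real \<Rightarrow> real"
  assumes sS: "\<And>l. smooth_on UNIV (S l)" and sQ0: "\<And>l. smooth_on UNIV (Q0 l)"
    and sol: "is_smooth_solution lam S Q0 Q"
begin

lemma Qf_alg: "alg TYPE('m) (\<lambda>p. Q k (fst p) (snd p))"
  using sol by (auto simp: is_smooth_solution_def intro: alg.base)

lemma pde: "p \<in> halfplane \<Longrightarrow> Dd (\<lambda>p. Q k (fst p) (snd p)) (1,0) p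
   + lam k * Dd (\<lambda>p. Q k (fst p) (snd p)) (0,1) p = S k (\<chi> j. Q j (fst p) (snd p))"
  using sol unfolding is_smooth_solution_def Dd_def by (cases p) (auto simp: mem_HP)

lemma init_deriv: "Dd (\<lambda>p. Q k (fst p) (snd p)) (0,1) (0,y) = d1 (Q0 k) y"
proof -
  let ?F = "\<lambda>p. Q k (fst p) (snd p)"
  have h0: "((\<lambda>y. (0::real, y)) has_derivative (\<lambda>h. (0, h))) (at y)"
    by (auto intro!: derivative_eq_intros)
  have h1: "((\<lambda>y. ?F (0,y)) has_derivative (\<lambda>h. Dd ?F (0,h) (0,y))) (at y)"
    by (rule has_derivative_in_compose2[where t=halfplane and g="?F" and g'="\<lambda>p v. Dd ?F v p", OF _ _ _ h0])
       (auto intro!: Dd_has alg_diff[OF Qf_alg] simp: mem_HP)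
  have "(\<lambda>y. ?F (0,y)) = Q0 k" using sol by (auto simp: is_smooth_solution_def fun_eq_iff)
  moreover have "(Q0 k has_derivative frechet_derivative (Q0 k) (at y)) (at y)"
    using smooth_onD(1)[OF sQ0[of k]] frechet_derivative_works by blast
  ultimately have h2: "((\<lambda>y. ?F (0,y)) has_derivative frechet_derivative (Q0 k) (at y)) (at y)" by simp
  from has_derivative_unique[OF h1 h2] have "(\<lambda>h. Dd ?F (0,h) (0,y)) = frechet_derivative (Q0 k) (at y)" .
  then show ?thesis by (simp add: d1_def fun_eq_iff)
qed

lemma QD: "Dd (\<lambda>p. Q k (fst p) (snd p)) (1,c) (0,y) = S k (\<chi> j. Q0 j y) + (c - lam k) * d1 (Q0 k) y"
proof -
  let ?F = "\<lambda>p. Q k (fst p) (snd p)"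
  have p: "(0,y) \<in> halfplane" by (simp add: mem_HP)
  have "Dd ?F (1,c) (0,y) = Dd ?F (1,0) (0,y) + c * Dd ?F (0,1) (0,y)"
    using Dd_linear[OF alg_diff[OF Qf_alg p], where v="(1,c)"] by simp
  moreover have "Q j 0 y = Q0 j y" for j using sol by (simp add: is_smooth_solution_def)
  ultimately show ?thesis using pde[OF p, of k] init_deriv[of k y] by (simp add: algebra_simps)
qed

lemma QDD: "Dd (\<lambda>p. Dd (\<lambda>p. Q l (fst p) (snd p)) (1, lam l) p) (1, lam l) (0,y)
   = (\<Sum>k\<in>UNIV. (S k (\<chi> j. Q0 j y) + (lam l - lam k) * d1 (Q0 k) y) * dm (S l) k (\<chi> j. Q0 j y))"
proof -
  let ?R = "\<lambda>p. S l (\<chi> k. Q k (fst p) (snd p))"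
  have p: "(0,y) \<in> halfplane" by (simp add: mem_HP)
  have aR: "alg TYPE('m) ?R" by (rule alg.compm[OF sS]) (use Qf_alg in blast)
  have eq: "\<forall>p\<in>halfplane. ?R p = Dd (\<lambda>p. Q l (fst p) (snd p)) (1, lam l) p"
  proof
    fix p :: "real \<times> real" assume p: "p \<in> halfplane"
    show "?R p = Dd (\<lambda>p. Q l (fst p) (snd p)) (1, lam l) p"
      using Dd_linear[OF alg_diff[OF Qf_alg p], where v="(1, lam l)"] pde[OF p, of l] by simp
  qed
  have "Dd (\<lambda>p. Dd (\<lambda>p. Q l (fst p) (snd p)) (1, lam l) p) (1, lam l) (0,y) = Dd ?R (1, lam l) (0,y)"
    by (rule Dd_cong[OF aR eq p])
  also have "\<dots> = (\<Sum>k\<in>UNIV. Dd (\<lambda>p. Q k (fst p) (snd p)) (1, lam l) (0,y) * dm (S l) k (\<chi> j. Q j (fst (0::real,y)) (snd (0::real,y))))"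
    by (rule Dd_compm[OF sS Qf_alg p])
  also have "\<dots> = (\<Sum>k\<in>UNIV. (S k (\<chi> j. Q0 j y) + (lam l - lam k) * d1 (Q0 k) y) * dm (S l) k (\<chi> j. Q0 j y))"
    using sol by (simp add: QD is_smooth_solution_def)
  finally show ?thesis .
qed

lemma U_alg: "alg TYPE('m) (Uf lam S Q0 l k)"
proof -
  have aL: "alg TYPE('m) (Lf lam l k)" for k unfolding Lf_def by (rule alg.lin)
  have a1: "alg TYPE('m) (\<lambda>p. Q0 k (Lf lam l k p))" by (rule alg.comp1[OF sQ0 aL])
  have a2: "alg TYPE('m) (\<lambda>p. S k (\<chi> j. Q0 j (Lf lam l k p)))"
    by (rule alg.compm[OF sS]) (intro allI alg.comp1[OF sQ0 aL])
  show ?thesis unfolding Uf_def by (intro alg.add a1 alg.mul alg.lin a2)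
qed

lemma W_alg: "alg TYPE('m) (Wf lam S Q0 l)"
  unfolding Wf_def by (rule alg.compm[OF sS]) (intro allI U_alg)

lemma U0: "Uf lam S Q0 l k (0, y) = Q0 k y"
  by (simp add: Uf_def Lf_def)

lemma UD: "Dd (Uf lam S Q0 l k) (1,0) (0,y) = (lam l - lam k) * d1 (Q0 k) y + S k (\<chi> j. Q0 j y)"
proof -
  have p: "(0,y) \<in> halfplane" by (simp add: mem_HP)
  have aL: "alg TYPE('m) (Lf lam l k)" for k unfolding Lf_def by (rule alg.lin)
  have a1: "alg TYPE('m) (\<lambda>p. Q0 k (Lf lam l k p))" by (rule alg.comp1[OF sQ0 aL])
  have a2: "alg TYPE('m) (\<lambda>p. S k (\<chi> j. Q0 j (Lf lam l k p)))"
    by (rule alg.compm[OF sS]) (intro allI alg.comp1[OF sQ0 aL])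
  have a3: "alg TYPE('m) (\<lambda>p::real\<times>real. 1 * fst p + 0 * snd p + 0)" by (rule alg.lin)
  have "Dd (Uf lam S Q0 l k) (1,0) (0,y) = Dd (\<lambda>p. Q0 k (Lf lam l k p)) (1,0) (0,y)
     + Dd (\<lambda>p. (1 * fst p + 0 * snd p + 0) * S k (\<chi> j. Q0 j (Lf lam l k p))) (1,0) (0,y)"
    unfolding Uf_def by (rule Dd_add[OF a1 alg.mul[OF a3 a2] p])
  also have "Dd (\<lambda>p. Q0 k (Lf lam l k p)) (1,0) (0,y) = Dd (Lf lam l k) (1,0) (0,y) * d1 (Q0 k) (Lf lam l k (0,y))"
    by (rule Dd_comp1[OF sQ0 aL p])
  also have "Dd (Lf lam l k) (1,0) (0,y) = (lam l - lam k) * fst (1::real,0::real) + 1 * snd (1::real,0::real)"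
    unfolding Lf_def by (rule Dd_lin[OF p])
  also have "Dd (\<lambda>p. (1 * fst p + 0 * snd p + 0) * S k (\<chi> j. Q0 j (Lf lam l k p))) (1,0) (0,y)
     = (1 * fst (0::real,y) + 0 * snd (0::real,y) + 0) * Dd (\<lambda>p. S k (\<chi> j. Q0 j (Lf lam l k p))) (1,0) (0,y)
       + Dd (\<lambda>p::real\<times>real. 1 * fst p + 0 * snd p + 0) (1,0) (0,y) * S k (\<chi> j. Q0 j (Lf lam l k (0,y)))"
    by (rule Dd_mul[OF a3 a2 p])
  also have "Dd (\<lambda>p::real\<times>real. 1 * fst p + 0 * snd p + 0) (1,0) (0,y) = 1 * fst (1::real,0::real) + 0 * snd (1::real,0::real)"
    by (rule Dd_lin[OF p])
  finally show ?thesis by (simp add: Lf_def)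
qed

lemma WD: "Dd (Wf lam S Q0 l) (1,0) (0,y)
   = (\<Sum>k\<in>UNIV. (S k (\<chi> j. Q0 j y) + (lam l - lam k) * d1 (Q0 k) y) * dm (S l) k (\<chi> j. Q0 j y))"
proof -
  have p: "(0,y) \<in> halfplane" by (simp add: mem_HP)
  have "Dd (Wf lam S Q0 l) (1,0) (0,y) = (\<Sum>k\<in>UNIV. Dd (Uf lam S Q0 l k) (1,0) (0,y) * dm (S l) k (\<chi> j. Uf lam S Q0 l j (0,y)))"
    unfolding Wf_def by (rule Dd_compm[OF sS U_alg p])
  then show ?thesis by (simp add: UD U0 algebra_simps)
qed

end



lemma final_arith:
  fixes \<alpha> t M1 M2 Qv Q0y A B W :: real
  assumes a: "0 < \<alpha>" and t: "0 < t"
    and h1: "\<bar>Qv - Q0y - t*A - t^2/2*B\<bar> \<le> M1*t^3"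
    and h2: "\<bar>W - A - (\<alpha>*t)*B\<bar> \<le> M2*(\<alpha>*t)^2"
  shows "\<bar>(Q0y + (1 - 1/(2*\<alpha>))*t*A + t/(2*\<alpha>)*W) - Qv\<bar> \<le> (M2*\<alpha>/2 + M1) * \<bar>t^3\<bar>"
proof -
  define E1 where "E1 = Qv - Q0y - t*A - t^2/2*B"
  define E2 where "E2 = W - A - (\<alpha>*t)*B"
  have eq: "(Q0y + (1 - 1/(2*\<alpha>))*t*A + t/(2*\<alpha>)*W) - Qv = t/(2*\<alpha>) * E2 - E1"
    using a unfolding E1_def E2_def by (simp add: field_simps power2_eq_square)
  have "\<bar>t/(2*\<alpha>) * E2\<bar> = t/(2*\<alpha>) * \<bar>E2\<bar>" using a t by (simp add: abs_mult)
  also have "\<dots> \<le> t/(2*\<alpha>) * (M2*(\<alpha>*t)^2)"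
    using h2 a t unfolding E2_def by (intro mult_left_mono) auto
  also have "\<dots> = M2*\<alpha>/2 * t^3" using a by (simp add: field_simps power2_eq_square power3_eq_cube)
  finally have "\<bar>t/(2*\<alpha>) * E2\<bar> \<le> M2*\<alpha>/2 * t^3" .
  then have "\<bar>t/(2*\<alpha>) * E2 - E1\<bar> \<le> M2*\<alpha>/2 * t^3 + M1 * t^3"
    using h1 unfolding E1_def by linarith
  then show ?thesis using t unfolding eq by (simp add: algebra_simps)
qed

theorem theorem2:
  fixes lam :: "'m::finite \<Rightarrow> real"
    and S :: "'m \<Rightarrow> real^'m \<Rightarrow> real"
    and Q0 :: "'m \<Rightarrow> real \<Rightarrow> real"
    and Q :: "'m \<Rightarrow> real \<Rightarrow> real \<Rightarrow> real"
    and \<alpha> :: real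
  assumes "\<And>l. smooth_on UNIV (S l)"
    and "\<And>l. smooth_on UNIV (Q0 l)"
    and "is_smooth_solution lam S Q0 Q"
    and "0 < \<alpha>" and "\<alpha> < 1"
  shows "\<forall>x l. (\<lambda>t. Q1 lam S Q0 \<alpha> l t x - Q l t x) \<in> O[at_right 0](\<lambda>t. t ^ 3)"
proof (intro allI)
  fix x :: real and l :: 'm
  note A = assms(1) assms(2) assms(3)
  define c where "c = lam l"
  define a where "a = x - \<bar>c\<bar>"
  define b where "b = x + \<bar>c\<bar>"
  let ?F = "\<lambda>p. Q l (fst p) (snd p)"
  obtain M1 where M1: "\<forall>y\<in>{a..b}. \<forall>s\<in>{0..1}.
    \<bar>?F (s, y + c * s) - ?F (0, y) - s * Dd ?F (1,c) (0,y) - s^2/2 * Dd (\<lambda>p. Dd ?F (1,c) p) (1,c) (0,y)\<bar> \<le> M1 * s^3"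
    using K3[OF Qf_alg[OF A], where a=a and b=b and c=c] by blast
  obtain M2 where M2: "\<forall>y\<in>{a..b}. \<forall>s\<in>{0..1}.
    \<bar>Wf lam S Q0 l (s, y + 0 * s) - Wf lam S Q0 l (0, y) - s * Dd (Wf lam S Q0 l) (1,0) (0,y)\<bar> \<le> M2 * s^2"
    using K2[OF W_alg[OF A], where a=a and b=b and c=0] by blast
  show "(\<lambda>t. Q1 lam S Q0 \<alpha> l t x - Q l t x) \<in> O[at_right 0](\<lambda>t. t ^ 3)"
  proof (rule bigoI[where c="M2*\<alpha>/2 + M1"], rule eventually_at_rightI)
    fix t :: real assume t: "t \<in> {0<..<1}"
    define y where "y = x - c * t"
    have y: "y \<in> {a..b}"
    proof -
      have "\<bar>c * t\<bar> \<le> \<bar>c\<bar>" using t by (auto simp: abs_mult intro: mult_left_le)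
      then show ?thesis unfolding y_def a_def b_def by auto
    qed
    have t01: "t \<in> {0..1}" using t by auto
    have at01: "\<alpha> * t \<in> {0..1}" using t assms(4,5) by (auto intro: mult_le_one)
    define B where "B = (\<Sum>k\<in>UNIV. (S k (\<chi> j. Q0 j y) + (lam l - lam k) * d1 (Q0 k) y) * dm (S l) k (\<chi> j. Q0 j y))"
    have Q00: "Q j 0 z = Q0 j z" for j z using assms(3) by (simp add: is_smooth_solution_def)
    have h1: "\<bar>Q l t x - Q0 l y - t * S l (\<chi> j. Q0 j y) - t^2/2 * B\<bar> \<le> M1 * t^3"
      using M1[rule_format, OF y t01]
      unfolding c_def B_def QDD[OF A] QD[OF A]
      by (simp add: Q00 y_def c_def)
    have Wq: "Wf lam S Q0 l (\<alpha> * t, y) = S l (\<chi> k. Qstar lam S Q0 \<alpha> k l t x)"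
    proof -
      have "Lf lam l k (\<alpha> * t, y) = xi lam \<alpha> l k t x" for k
        by (simp add: Lf_def xi_def y_def c_def algebra_simps)
      then show ?thesis by (simp add: Wf_def Uf_def Qstar_def Let_def)
    qed
    have h2: "\<bar>S l (\<chi> k. Qstar lam S Q0 \<alpha> k l t x) - S l (\<chi> j. Q0 j y) - (\<alpha> * t) * B\<bar> \<le> M2 * (\<alpha> * t)^2"
      using M2[rule_format, OF y at01]
      unfolding B_def WD[OF A] Wq[symmetric]
      by (simp add: Wf_def U0[OF A])
    have "\<bar>(Q0 l y + (1 - 1/(2*\<alpha>))*t*S l (\<chi> j. Q0 j y) + t/(2*\<alpha>)*S l (\<chi> k. Qstar lam S Q0 \<alpha> k l t x)) - Q l t x\<bar>
       \<le> (M2*\<alpha>/2 + M1) * \<bar>t^3\<bar>"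
      by (rule final_arith[OF assms(4) _ h1 h2]) (use t in auto)
    then show "norm (Q1 lam S Q0 \<alpha> l t x - Q l t x) \<le> (M2*\<alpha>/2 + M1) * norm (t^3)"
      by (simp add: Q1_def y_def c_def)
  qed simp
qed


end
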